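(* Fix $n\ge 2$ and $i\in\{1,\dots,n\}$. Then for every integer $k\ge 1$: (1) $\partial[i]\,\lambda_n^{(k)}=(-1)^{i-1}\,k\,\lambda_{n-1}^{(k)}$; (2) for $1\le k\le n$, $\partial[i]\,e_n^{(k)}=(-1)^{i-1}\,e_{n-1}^{(k-1)}$, where $e_{n-1}^{(0)}:=0$ and $e_{n-1}^{(n)}:=0$ (in particular $\partial[i]e_n^{(1)}=0$). Here both sides are regarded as elements of the span of words on $\{1,\dots,n\}\setminus\{i\}$ via the identification described in the context.
   Context: Identify each permutation $\sigma\in S_r$ with the injective word $\sigma(1)\sigma(2)\cdots\sigma(r)$ on $\{1,\dots,r\}$ (one-line notation), so that elements of the group algebra $\mathbb{C}S_r$ are linear combinations of such words. A descent of a word $w_1\cdots w_m$ is an index $t$ with $w_t>w_{t+1}$. For $1\le k\le r$ let $S(r;k)$ be the set of permutations in $S_r$ with exactly $k-1$ descents, and define $l_r^{(k)}=(-1)^{k-1}\sum_{\sigma\in S(r;k)}\mathrm{sgn}(\sigma)\,\sigma$ (with $l_r^{(k)}=0$ if $S(r;k)$ is empty, e.g. $k>r$), and $\lambda_r^{(k)}=\sum_{t=0}^{k-1}(-1)^t\binom{r+t}{t}\,l_r^{(k-t)}$ for $k\ge1$. The Eulerian idempotents $e_r^{(1)},\dots,e_r^{(r)}\in\mathbb{C}S_r$ are the elements satisfying $(-1)^{k-1}\lambda_r^{(k)}=\sum_{j=1}^{r}k^j e_r^{(j)}$ for all integers $k\ge1$ (they are determined by the cases $k=1,\dots,r$ since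 the matrix $(k^j)$ is an invertible Vandermonde matrix). For an injective word $a_1\cdots a_m$ on $\{1,\dots,n\}$, the simplicial boundary is $\partial(a_1\cdots a_m)=\sum_{j=1}^m(-1)^{j-1}a_1\cdots a_{j-1}a_{j+1}\cdots a_m$, extended linearly. For $i\in\{1,\dots,n\}$, $\partial[i]$ denotes the part of $\partial$ that deletes the letter $i$: $\partial[i](a_1\cdots a_m)=(-1)^{j-1}a_1\cdots\widehat{a_j}\cdots a_m$ if $a_j=i$, and $0$ if $i$ does not occur. Words on $\{1,\dots,n\}\setminus\{i\}$ of length $n-1$ are identified with permutations in $S_{n-1}$ by replacing each letter $i+t$ ($t\ge1$) by $i+t-1$; via this identification $\lambda_{n-1}^{(k)}$ and $e_{n-1}^{(k)}$ are viewed as linear combinations of words on $\{1,\dots,n\}\setminus\{i\}$. *)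

theory Defs
  imports Complex_Main "HOL-Combinatorics.Permutations"
begin

text \<open>Elements of the span of injective words: functions from words (nat lists) to complex
  coefficients; the support is always finite for the objects considered here.\<close>
type_synonym lincomb = "nat list \<Rightarrow> complex"

text \<open>Permutations of S_r in one-line notation: injective words with letter set {1..r}.\<close>
definition perm_words :: "nat \<Rightarrow> nat list set" where
  "perm_words r = {w. distinct w \<and> set w = {1..r}}"

definition word_perm :: "nat list \<Rightarrow> nat \<Rightarrow> nat" where
  "word_perm w = (\<lambda>x. if x \<in> {1..length w} then w ! (x - 1) else x)"

definition word_sgn :: "nat list \<Rightarrow> int" where
  "word_sgn w = sign (word_perm w)"

definition descents :: "nat list \<Rightarrow> nat" where
  "descents w = card {t. Suc t < length w \<and> w ! t > w ! Suc t}"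

definition l_elt :: "nat \<Rightarrow> nat \<Rightarrow> lincomb" where
  "l_elt r k = (\<lambda>w. if w \<in> perm_words r \<and> descents w = k - 1 \<and> k \<ge> 1
                     then (-1) ^ (k - 1) * of_int (word_sgn w) else 0)"

definition lambda_elt :: "nat \<Rightarrow> nat \<Rightarrow> lincomb" where
  "lambda_elt r k = (\<lambda>w. \<Sum>t<k. (-1) ^ t * of_nat ((r + t) choose t) * l_elt r (k - t) w)"

text \<open>Eulerian idempotents e_r^(1..r), determined by the Vandermonde system for k = 1..r;
  extended by 0 outside {1..r} (so e_r^(0) = 0).\<close>
definition euler_idem :: "nat \<Rightarrow> nat \<Rightarrow> lincomb" where
  "euler_idem r = (THE e. (\<forall>j. j \<notin> {1..r} \<longrightarrow> e j = (\<lambda>_. 0)) \<and>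
      (\<forall>k\<in>{1..r}. \<forall>w. (-1) ^ (k - 1) * lambda_elt r k w
                        = (\<Sum>j=1..r. of_nat k ^ j * e j w)))"

text \<open>Partial boundary deleting the letter i: the coefficient of v in \<partial>[i] f is the sum over
  injective words w containing i with w minus i equal to v, of (-1)^(j-1) f(w), where j is the
  (1-based) position of i in w.\<close>
definition bd_letter :: "nat \<Rightarrow> lincomb \<Rightarrow> lincomb" where
  "bd_letter i f = (\<lambda>v. \<Sum>w\<in>{w. distinct w \<and> i \<in> set w \<and> remove1 i w = v}.
        (-1) ^ length (takeWhile (\<lambda>a. a \<noteq> i) w) * f w)"

definition shift_letter :: "nat \<Rightarrow> nat \<Rightarrow> nat" where
  "shift_letter i a = (if a > i then a - 1 else a)"

text \<open>View a combination of words on {1..n-1} as a combination of words on {1..n} minus {i}.\<close>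
definition relabel :: "nat \<Rightarrow> lincomb \<Rightarrow> lincomb" where
  "relabel i g = (\<lambda>v. if i \<notin> set v then g (map (shift_letter i) v) else 0)"

end

theory Submission
  imports Defs "HOL-Computational_Algebra.Polynomial"
begin

lemma descents_Nil[simp]: "descents [] = 0" by (simp add: descents_def)

lemma descents_Cons: "descents (a # xs) = (if xs \<noteq> [] \<and> a > hd xs then 1 else 0) + descents xs"
proof -
  have eq: "{t. Suc t < length (a#xs) \<and> (a#xs) ! t > (a#xs) ! Suc t}
     = (if xs \<noteq> [] \<and> a > hd xs then {0} else {}) \<union> Suc ` {t. Suc t < length xs \<and> xs ! t > xs ! Suc t}"
    (is "?L = ?R")
  proof (rule set_eqI)
    fix t show "t \<in> ?L \<longleftrightarrow> t \<in> ?R"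
      by (cases t) (auto simp: hd_conv_nth)
  qed
  have fin: "finite {t. Suc t < length xs \<and> xs ! t > xs ! Suc t}" by (rule finite_subset[of _ "{..<length xs}"]) auto
  show ?thesis unfolding descents_def eq
    using fin by (auto simp: card_image)
qed

lemma descents_append: "descents (xs @ ys) = descents xs + descents ys +
   (if xs \<noteq> [] \<and> ys \<noteq> [] \<and> last xs > hd ys then 1 else 0)"
  by (induction xs) (auto simp: descents_Cons)

lemma descents_le: "descents w \<le> length w - 1"
proof -
  have "{t. Suc t < length w \<and> w ! t > w ! Suc t} \<subseteq> {..<length w - 1}" by auto
  then show ?thesis unfolding descents_def by (metis card_lessThan card_mono finite_lessThan)
qed

lemma perm_words_length: "w \<in> perm_words r \<Longrightarrow> length w = r"
proof -
  assume "w \<in> perm_words r"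
  then have "distinct w" "set w = {1..r}" by (auto simp: perm_words_def)
  then have "length w = card {1..r}" by (metis distinct_card)
  then show ?thesis by simp
qed

lemma word_perm_permutes: assumes "w \<in> perm_words r" shows "word_perm w permutes {1..r}"
proof -
  have len: "length w = r" using perm_words_length[OF assms] .
  have d: "distinct w" and s: "set w = {1..r}" using assms by (auto simp: perm_words_def)
  have inj: "inj_on (word_perm w) {1..r}"
  proof (rule inj_onI)
    fix x y assume "x \<in> {1..r}" "y \<in> {1..r}" "word_perm w x = word_perm w y"
    then show "x = y" using d len by (auto simp: word_perm_def nth_eq_iff_index_eq)
  qed
  have img: "word_perm w ` {1..r} = {1..r}"
  proof
    show "word_perm w ` {1..r} \<subseteq> {1..r}"
    proof
      fix y assume "y \<in> word_perm w ` {1..r}"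
      then obtain x where x: "x \<in> {1..r}" "y = word_perm w x" by blast
      then have "y = w ! (x - 1)" using len by (simp add: word_perm_def)
      moreover have "x - 1 < length w" using x len by auto
      ultimately have "y \<in> set w" by simp
      then show "y \<in> {1..r}" using s by simp
    qed
  next
    show "{1..r} \<subseteq> word_perm w ` {1..r}"
    proof
      fix y assume "y \<in> {1..r}"
      then have "y \<in> set w" using s by auto
      then obtain j where j: "j < length w" "w ! j = y" by (auto simp: in_set_conv_nth)
      then have "word_perm w (Suc j) = y" using len by (auto simp: word_perm_def)
      moreover have "Suc j \<in> {1..r}" using j len by auto
      ultimately show "y \<in> word_perm w ` {1..r}" by (metis image_eqI)
    qed
  qed
  show ?thesis
  proof (rule bij_imp_permutes)
    show "bij_betw (word_perm w) {1..r} {1..r}" unfolding bij_betw_def using inj img by blast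
  next
    fix x assume "x \<notin> {1..r}" then show "word_perm w x = x" using len by (auto simp add: word_perm_def)
  qed
qed

lemma word_perm_permutation: "w \<in> perm_words r \<Longrightarrow> permutation (word_perm w)"
  using word_perm_permutes permutation_permutes by blast

lemma word_perm_pos_swap:
  assumes "a < length w" "b < length w"
  shows "word_perm (w[a := w!b, b := w!a]) = word_perm w \<circ> transpose (Suc a) (Suc b)"
proof (rule ext)
  fix x
  consider "x = Suc a" | "x = Suc b" "x \<noteq> Suc a" | "x \<noteq> Suc a" "x \<noteq> Suc b" by blast
  then show "word_perm (w[a := w!b, b := w!a]) x = (word_perm w \<circ> transpose (Suc a) (Suc b)) x"
  proof cases
    case 1 then show ?thesis using assms by (auto simp: word_perm_def transpose_def nth_list_update)
  next
    case 2 then show ?thesis using assms by (auto simp: word_perm_def transpose_def nth_list_update)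
  next
    case 3
    then have t: "transpose (Suc a) (Suc b) x = x" by (simp add: transpose_def)
    show ?thesis
    proof (cases "x \<in> {1..length w}")
      case True
      then have "x - 1 \<noteq> a" "x - 1 \<noteq> b" using 3 by auto
      then show ?thesis using True t by (simp add: word_perm_def)
    next
      case False then show ?thesis using t by (auto simp add: word_perm_def)
    qed
  qed
qed

lemma word_sgn_pos_swap:
  assumes "w \<in> perm_words r" "a < length w" "b < length w" "a \<noteq> b"
  shows "word_sgn (w[a := w!b, b := w!a]) = - word_sgn w"
  using assms unfolding word_sgn_def word_perm_pos_swap[OF assms(2,3)]
  by (simp add: sign_compose word_perm_permutation permutation_swap_id sign_swap_id)

lemma word_perm_val_swap:
  assumes "a \<in> {1..length w}" "b \<in> {1..length w}"
  shows "word_perm (map (transpose a b) w) = transpose a b \<circ> word_perm w"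
proof (rule ext)
  fix x
  show "word_perm (map (transpose a b) w) x = (transpose a b \<circ> word_perm w) x"
  proof (cases "x \<in> {1..length w}")
    case True
    then have "x - 1 < length w" by auto
    then show ?thesis using True by (simp add: word_perm_def)
  next
    case False
    then have "x \<noteq> a" "x \<noteq> b" using assms by auto
    then show ?thesis using False by (auto simp add: word_perm_def transpose_def)
  qed
qed

lemma word_sgn_val_swap:
  assumes "w \<in> perm_words r" "a \<in> {1..r}" "b \<in> {1..r}" "a \<noteq> b"
  shows "word_sgn (map (transpose a b) w) = - word_sgn w"
  using assms perm_words_length[OF assms(1)] unfolding word_sgn_def
  by (simp add: word_perm_val_swap sign_compose word_perm_permutation permutation_swap_id sign_swap_id)

lemma word_sgn_snoc: "length v = r \<Longrightarrow> word_sgn (v @ [Suc r]) = word_sgn v"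
  unfolding word_sgn_def
proof (rule arg_cong[where f=sign], rule ext)
  fix x assume l: "length v = r"
  consider "x \<in> {1..r}" | "x = Suc r" | "x \<notin> {1..Suc r}" by fastforce
  then show "word_perm (v @ [Suc r]) x = word_perm v x"
  proof cases
    case 1 then have "x - 1 < r" by auto
    then show ?thesis using 1 l by (simp add: word_perm_def nth_append)
  next
    case 2 then show ?thesis using l by (simp add: word_perm_def nth_append)
  next
    case 3 then show ?thesis using l by (auto simp add: word_perm_def)
  qed
qed

definition ins :: "nat \<Rightarrow> nat list \<Rightarrow> nat \<Rightarrow> nat list" where
  "ins p v i = take p v @ i # drop p v"

lemma ins_length[simp]: "length (ins p v i) = Suc (length v)"
  by (simp add: ins_def)

lemma ins_perm:
  assumes "distinct v" "i \<notin> set v" "set v \<union> {i} = {1..r}"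
  shows "ins p v i \<in> perm_words r"
proof -
  have e: "set (take p v) \<union> set (drop p v) = set v" by (metis append_take_drop_id set_append)
  have "set (ins p v i) = set v \<union> {i}"
    unfolding ins_def using e by auto
  moreover have "distinct (ins p v i)"
  proof -
    have "distinct (take p v @ drop p v)" using assms(1) by simp
    then have "distinct (take p v)" "distinct (drop p v)" "set (take p v) \<inter> set (drop p v) = {}"
      by (simp_all only: distinct_append)
    moreover have "i \<notin> set (take p v)" "i \<notin> set (drop p v)"
      using assms(2) in_set_takeD in_set_dropD by fastforce+
    ultimately show ?thesis unfolding ins_def by auto
  qed
  ultimately show ?thesis using assms(3) by (simp add: perm_words_def)
qed

lemma ins_step:
  assumes "p < length v"
  shows "ins (Suc p) v i = (ins p v i)[p := ins p v i ! Suc p, Suc p := ins p v i ! p]"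
proof -
  have v: "v = take p v @ v ! p # drop (Suc p) v"
    using assms by (simp add: id_take_nth_drop)
  have t: "take (Suc p) v = take p v @ [v ! p]" using assms by (simp add: take_Suc_conv_app_nth)
  have d: "drop p v = v ! p # drop (Suc p) v" using assms by (simp add: Cons_nth_drop_Suc)
  have lt: "length (take p v) = p" using assms by simp
  show ?thesis unfolding ins_def t d
    using lt by (simp add: list_update_append nth_append)
qed

lemma sgn_ins:
  assumes "distinct v" "i \<notin> set v" "set v \<union> {i} = {1..r}" "p \<le> length v"
  shows "word_sgn (ins p v i) = (-1) ^ (length v - p) * word_sgn (v @ [i])"
  using assms(4)
proof (induction "length v - p" arbitrary: p)
  case 0
  then have "p = length v" by simp
  then show ?case by (simp add: ins_def)
next
  case (Suc j)
  then have p: "p < length v" by simp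
  have IH: "word_sgn (ins (Suc p) v i) = (-1) ^ (length v - Suc p) * word_sgn (v @ [i])"
    using Suc p by simp
  have "word_sgn (ins (Suc p) v i) = - word_sgn (ins p v i)"
    unfolding ins_step[OF p]
    by (rule word_sgn_pos_swap[OF ins_perm[OF assms(1-3)]]) (use p in auto)
  then have "word_sgn (ins p v i) = - ((-1) ^ (length v - Suc p) * word_sgn (v @ [i]))"
    using IH by simp
  moreover have "length v - p = Suc (length v - Suc p)" using p by simp
  ultimately show ?case by simp
qed

lemma shift_transpose:
  assumes "x \<noteq> i"
  shows "shift_letter (Suc i) (transpose i (Suc i) x) = shift_letter i x"
  using assms by (auto simp: shift_letter_def transpose_def)

lemma sgn_val:
  assumes "1 \<le> i" "i \<le> n" "distinct v" "set v = {1..n} - {i}"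
  shows "word_sgn (v @ [i]) = (-1) ^ (n - i) * word_sgn (map (shift_letter i) v @ [n])"
  using assms
proof (induction "n - i" arbitrary: i v)
  case 0
  then have i: "i = n" by simp
  have "map (shift_letter i) v = v"
  proof (rule map_idI)
    fix x assume "x \<in> set v" then show "shift_letter i x = x" using 0 i by (auto simp: shift_letter_def)
  qed
  then show ?case using i by simp
next
  case (Suc j)
  have lt: "i < n" using Suc.hyps(2) by linarith
  define \<tau> where "\<tau> = transpose i (Suc i)"
  have vi: "v @ [i] \<in> perm_words n"
  proof -
    have "i \<in> {1..n}" using Suc.prems(1,2) by simp
    then have "insert i ({1..n} - {i}) = {1..n}" by (rule insert_Diff)
    then have "set (v @ [i]) = {1..n}" using Suc.prems(4) by simp
    moreover have "distinct (v @ [i])" using Suc.prems(3,4) by simp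
    ultimately show ?thesis by (simp add: perm_words_def)
  qed
  have s1: "word_sgn (map \<tau> (v @ [i])) = - word_sgn (v @ [i])"
    unfolding \<tau>_def by (rule word_sgn_val_swap[OF vi]) (use Suc.prems lt in auto)
  have m: "map \<tau> (v @ [i]) = map \<tau> v @ [Suc i]" by (simp add: \<tau>_def)
  have d': "distinct (map \<tau> v)" using Suc.prems by (simp add: \<tau>_def distinct_map)
  have s': "set (map \<tau> v) = {1..n} - {Suc i}"
  proof -
    have "set (map \<tau> v) = \<tau> ` ({1..n} - {i})" using Suc.prems by simp
    also have "\<dots> = {1..n} - {Suc i}"
      unfolding \<tau>_def
    proof (rule set_eqI)
      fix x
      show "x \<in> transpose i (Suc i) ` ({1..n} - {i}) \<longleftrightarrow> x \<in> {1..n} - {Suc i}"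
        unfolding in_transpose_image_iff using Suc.prems(1) lt
        by (cases "x = i"; cases "x = Suc i") auto
    qed
    finally show ?thesis .
  qed
  have IH: "word_sgn (map \<tau> v @ [Suc i]) = (-1) ^ (n - Suc i) * word_sgn (map (shift_letter (Suc i)) (map \<tau> v) @ [n])"
    using Suc.hyps(1)[of "Suc i" "map \<tau> v"] Suc.hyps(2) lt d' s' by simp
  have mm: "map (shift_letter (Suc i)) (map \<tau> v) = map (shift_letter i) v"
    using Suc.prems by (auto simp: \<tau>_def shift_transpose)
  have e: "n - i = Suc (n - Suc i)" using lt by simp
  have a: "word_sgn (v @ [i]) = - word_sgn (map \<tau> v @ [Suc i])" using s1 m by simp
  have b: "word_sgn (map \<tau> v @ [Suc i]) = (-1) ^ (n - Suc i) * word_sgn (map (shift_letter i) v @ [n])"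
    using IH unfolding mm .
  show ?case unfolding e using a b by simp
qed

definition ind :: "bool \<Rightarrow> nat" where "ind b = (if b then 1 else 0)"

lemma descents_ins:
  "descents (ins p v i) + ind (take p v \<noteq> [] \<and> drop p v \<noteq> [] \<and> last (take p v) > hd (drop p v))
   = descents v + ind (drop p v \<noteq> [] \<and> i > hd (drop p v)) + ind (take p v \<noteq> [] \<and> last (take p v) > i)"
proof -
  have 1: "descents (ins p v i) = descents (take p v) + descents (i # drop p v) + ind (take p v \<noteq> [] \<and> last (take p v) > i)"
    unfolding ins_def descents_append ind_def by simp
  have 2: "descents (i # drop p v) = ind (drop p v \<noteq> [] \<and> i > hd (drop p v)) + descents (drop p v)"
    unfolding descents_Cons ind_def by simp
  have 3: "descents v = descents (take p v) + descents (drop p v) + ind (take p v \<noteq> [] \<and> drop p v \<noteq> [] \<and> last (take p v) > hd (drop p v))"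
    using descents_append[of "take p v" "drop p v"] unfolding ind_def by simp
  show ?thesis using 1 2 3 by simp
qed

lemma ind_ineq0:
  fixes x y i :: nat
  assumes "x \<noteq> i" "y \<noteq> i"
  shows "ind (x > y) \<le> ind (i > y) + ind (x > i) \<and> ind (i > y) + ind (x > i) \<le> ind (x > y) + 1"
  using assms unfolding ind_def by (cases "x < i"; cases "y < i") auto

lemma ind_ineq:
  fixes v :: "nat list"
  assumes "i \<notin> set v"
  shows "ind (take p v \<noteq> [] \<and> drop p v \<noteq> [] \<and> last (take p v) > hd (drop p v))
      \<le> ind (drop p v \<noteq> [] \<and> i > hd (drop p v)) + ind (take p v \<noteq> [] \<and> last (take p v) > i)
    \<and> ind (drop p v \<noteq> [] \<and> i > hd (drop p v)) + ind (take p v \<noteq> [] \<and> last (take p v) > i)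
      \<le> ind (take p v \<noteq> [] \<and> drop p v \<noteq> [] \<and> last (take p v) > hd (drop p v)) + 1"
proof -
  have h: "drop p v \<noteq> [] \<Longrightarrow> hd (drop p v) \<noteq> i"
    using assms by (metis hd_in_set in_set_dropD)
  have l: "take p v \<noteq> [] \<Longrightarrow> last (take p v) \<noteq> i"
    using assms by (metis last_in_set in_set_takeD)
  show ?thesis
  proof (cases "drop p v = []")
    case True then show ?thesis by (simp add: ind_def)
  next
    case False
    note F = False
    show ?thesis
    proof (cases "take p v = []")
      case True then show ?thesis by (simp add: ind_def)
    next
      case False
      have "hd (drop p v) \<noteq> i" "last (take p v) \<noteq> i" using h l F False by auto
      then show ?thesis using F False ind_ineq0[of "last (take p v)" i "hd (drop p v)"] by simp
    qed
  qed
qed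

lemma sum_A:
  fixes v :: "nat list"
  shows "(\<Sum>p<Suc (length v). ind (drop p v \<noteq> [] \<and> i > hd (drop p v))) = (\<Sum>q<length v. ind (i > v ! q))"
proof -
  have "(\<Sum>p<Suc (length v). ind (drop p v \<noteq> [] \<and> i > hd (drop p v)))
      = (\<Sum>p<length v. ind (drop p v \<noteq> [] \<and> i > hd (drop p v)))"
    by (simp add: ind_def)
  also have "\<dots> = (\<Sum>q<length v. ind (i > v ! q))"
    by (rule sum.cong) (auto simp: hd_drop_conv_nth)
  finally show ?thesis .
qed

lemma last_take_Suc: "q < length v \<Longrightarrow> last (take (Suc q) v) = v ! q"
  by (simp add: take_Suc_conv_app_nth)

lemma sum_B:
  fixes v :: "nat list"
  shows "(\<Sum>p<Suc (length v). ind (take p v \<noteq> [] \<and> last (take p v) > i)) = (\<Sum>q<length v. ind (v ! q > i))"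
proof -
  have "(\<Sum>p<Suc (length v). ind (take p v \<noteq> [] \<and> last (take p v) > i))
      = ind (take 0 v \<noteq> [] \<and> last (take 0 v) > i) + (\<Sum>q<length v. ind (take (Suc q) v \<noteq> [] \<and> last (take (Suc q) v) > i))"
    by (rule sum.lessThan_Suc_shift)
  also have "\<dots> = (\<Sum>q<length v. ind (v ! q > i))"
    by (auto simp: ind_def last_take_Suc intro!: sum.cong)
  finally show ?thesis .
qed

lemma sum_C:
  fixes v :: "nat list"
  shows "(\<Sum>p<Suc (length v). ind (take p v \<noteq> [] \<and> drop p v \<noteq> [] \<and> last (take p v) > hd (drop p v))) = descents v"
proof -
  have "(\<Sum>p<Suc (length v). ind (take p v \<noteq> [] \<and> drop p v \<noteq> [] \<and> last (take p v) > hd (drop p v)))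
      = ind (take 0 v \<noteq> [] \<and> drop 0 v \<noteq> [] \<and> last (take 0 v) > hd (drop 0 v)) + (\<Sum>q<length v. ind (take (Suc q) v \<noteq> [] \<and> drop (Suc q) v \<noteq> [] \<and> last (take (Suc q) v) > hd (drop (Suc q) v)))"
    by (rule sum.lessThan_Suc_shift)
  also have "\<dots> = (\<Sum>q<length v. ind (Suc q < length v \<and> v ! q > v ! Suc q))"
    by (auto simp: ind_def last_take_Suc hd_drop_conv_nth intro!: sum.cong)
  also have "\<dots> = (\<Sum>q\<in>{q\<in>{..<length v}. Suc q < length v \<and> v ! q > v ! Suc q}. 1)"
    unfolding ind_def by (rule sum.inter_filter[symmetric]) simp
  also have "\<dots> = card {q\<in>{..<length v}. Suc q < length v \<and> v ! q > v ! Suc q}" by simp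
  also have "{q\<in>{..<length v}. Suc q < length v \<and> v ! q > v ! Suc q} = {t. Suc t < length v \<and> v ! t > v ! Suc t}"
    by auto
  finally show ?thesis by (simp add: descents_def)
qed

lemma sum_AB:
  fixes v :: "nat list"
  assumes "i \<notin> set v"
  shows "(\<Sum>q<length v. ind (i > v ! q)) + (\<Sum>q<length v. ind (v ! q > i)) = length v"
proof -
  have "(\<Sum>q<length v. ind (i > v ! q)) + (\<Sum>q<length v. ind (v ! q > i)) = (\<Sum>q<length v. ind (i > v ! q) + ind (v ! q > i))"
    by (simp add: sum.distrib)
  also have "\<dots> = (\<Sum>q<length v. 1)"
  proof (rule sum.cong)
    fix q assume "q \<in> {..<length v}"
    then have "v ! q \<noteq> i" using assms nth_mem by fastforce
    then show "ind (i > v ! q) + ind (v ! q > i) = 1" unfolding ind_def by auto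
  qed simp
  finally show ?thesis by simp
qed

lemma ins_descents_split:
  fixes v :: "nat list"
  assumes "i \<notin> set v"
  obtains e where "\<And>p. descents (ins p v i) = descents v + e p" "\<And>p. e p \<le> 1"
    "(\<Sum>p<Suc (length v). e p) = length v - descents v"
proof -
  define A where "A p = ind (drop p v \<noteq> [] \<and> i > hd (drop p v))" for p
  define B where "B p = ind (take p v \<noteq> [] \<and> last (take p v) > i)" for p
  define C where "C p = ind (take p v \<noteq> [] \<and> drop p v \<noteq> [] \<and> last (take p v) > hd (drop p v))" for p
  define e where "e p = A p + B p - C p" for p
  have ineq: "C p \<le> A p + B p" "A p + B p \<le> C p + 1" for p
    using ind_ineq[OF assms, of p] unfolding A_def B_def C_def by auto
  have des: "descents (ins p v i) = descents v + e p" for p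
    using descents_ins[of p v i] ineq[of p] unfolding A_def B_def C_def e_def by simp
  have e1: "e p \<le> 1" for p using ineq[of p] unfolding e_def by simp
  have "(\<Sum>p<Suc (length v). e p) = (\<Sum>p<Suc (length v). A p + B p) - (\<Sum>p<Suc (length v). C p)"
    unfolding e_def by (rule sum_subtractf_nat) (use ineq in auto)
  also have "(\<Sum>p<Suc (length v). A p + B p) = length v"
    using sum_A[of v i] sum_B[of v i] sum_AB[OF assms] unfolding A_def B_def by (simp add: sum.distrib)
  also have "(\<Sum>p<Suc (length v). C p) = descents v"
    using sum_C[of v] unfolding C_def .
  finally show ?thesis using that des e1 by blast
qed

lemma key_sum:
  fixes v :: "nat list"
  assumes "i \<notin> set v" "k \<ge> 1"
  shows "(\<Sum>p<Suc (length v). (Suc (length v) + k - 1 - descents (ins p v i)) choose Suc (length v))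
       = k * ((Suc (length v) + k - 2 - descents v) choose length v)"
proof -
  define m where "m = length v"
  define d where "d = descents v"
  obtain e where des: "\<And>p. descents (ins p v i) = d + e p" and e1: "\<And>p. e p \<le> 1"
    and se: "(\<Sum>p<Suc m. e p) = m - d"
    using ins_descents_split[OF assms(1)] unfolding m_def d_def by metis
  have dm: "d \<le> m" using descents_le[of v] unfolding d_def m_def by simp
  define A' where "A' = m + k - 1 - d"
  have A: "Suc m + k - 1 - d = Suc A'" using dm assms(2) unfolding A'_def by simp
  have tm: "((Suc A' - e p) choose Suc m) + e p * (A' choose m) = (Suc A' choose Suc m)" for p
  proof (cases "e p = 0")
    case True then show ?thesis by simp
  next
    case False then have "e p = 1" using e1[of p] by simp
    then show ?thesis by simp
  qed
  have t2: "(Suc m + k - 1 - descents (ins p v i)) = Suc A' - e p" for p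
    using A des[of p] by simp
  have "(\<Sum>p<Suc m. (Suc A' - e p) choose Suc m) + (\<Sum>p<Suc m. e p) * (A' choose m)
      = (\<Sum>p<Suc m. ((Suc A' - e p) choose Suc m) + e p * (A' choose m))"
    by (simp only: sum.distrib sum_distrib_right)
  also have "\<dots> = Suc m * (Suc A' choose Suc m)" using tm by simp
  also have "\<dots> = Suc A' * (A' choose m)" by (rule Suc_times_binomial)
  finally have eq: "(\<Sum>p<Suc m. (Suc A' - e p) choose Suc m) + (m - d) * (A' choose m) = Suc A' * (A' choose m)"
    using se by simp
  have "Suc A' = (m - d) + k" using A dm assms(2) by simp
  then have "(\<Sum>p<Suc m. (Suc A' - e p) choose Suc m) = k * (A' choose m)"
    using eq by (simp add: add_mult_distrib)
  moreover have "Suc m + k - 2 - d = A'" unfolding A'_def by simp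
  ultimately show ?thesis unfolding m_def[symmetric] d_def[symmetric] t2 by simp
qed

lemma lambda_nonperm: "w \<notin> perm_words r \<Longrightarrow> lambda_elt r k w = 0"
  by (simp add: lambda_elt_def l_elt_def)

lemma lambda_perm:
  assumes w: "w \<in> perm_words r" and r: "r \<ge> 1" and k: "k \<ge> 1"
  shows "lambda_elt r k w = (-1) ^ (k - 1) * of_int (word_sgn w) * of_nat ((r + k - 1 - descents w) choose r)"
proof -
  define d where "d = descents w"
  have dr: "d \<le> r - 1" using descents_le[of w] perm_words_length[OF w] unfolding d_def by simp
  define s where "s = (of_int (word_sgn w) :: complex)"
  have "lambda_elt r k w = (\<Sum>t<k. (-1) ^ t * of_nat ((r + t) choose t) * (if d = k - t - 1 then (-1) ^ (k - t - 1) * s else 0))"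
    unfolding lambda_elt_def l_elt_def d_def s_def using w
    by (intro sum.cong) auto
  also have "\<dots> = (-1) ^ (k - 1) * s * of_nat ((r + k - 1 - d) choose r)"
  proof (cases "d \<le> k - 1")
    case True
    define t0 where "t0 = k - 1 - d"
    have "(\<Sum>t<k. (-1) ^ t * of_nat ((r + t) choose t) * (if d = k - t - 1 then (-1) ^ (k - t - 1) * s else 0))
        = (\<Sum>t<k. if t = t0 then (-1) ^ t * of_nat ((r + t) choose t) * ((-1) ^ (k - t - 1) * s) else (0::complex))"
      by (rule sum.cong) (use True in \<open>auto simp: t0_def\<close>)
    also have "\<dots> = (-1) ^ t0 * of_nat ((r + t0) choose t0) * ((-1) ^ (k - t0 - 1) * s)"
      using True k by (simp add: t0_def)
    also have "(r + t0) choose t0 = (r + t0) choose r"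
      using binomial_symmetric[of t0 "r + t0"] by simp
    also have "r + t0 = r + k - 1 - d" using True k unfolding t0_def by simp
    also have "(-1) ^ t0 * of_nat ((r + k - 1 - d) choose r) * ((-1) ^ (k - t0 - 1) * s)
        = ((-1) ^ (t0 + (k - t0 - 1)) :: complex) * s * of_nat ((r + k - 1 - d) choose r)"
      by (simp add: power_add)
    also have "t0 + (k - t0 - 1) = k - 1" using True k unfolding t0_def by simp
    finally show ?thesis .
  next
    case False
    then have "(r + k - 1 - d) choose r = 0" using k r by (simp add: binomial_eq_0)
    moreover have "(\<Sum>t<k. (-1) ^ t * of_nat ((r + t) choose t) * (if d = k - t - 1 then (-1) ^ (k - t - 1) * s else 0)) = (0::complex)"
      by (rule sum.neutral) (use False in auto)
    ultimately show ?thesis by simp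
  qed
  finally show ?thesis unfolding s_def d_def .
qed

lemma distinct_ins:
  assumes "distinct v" "i \<notin> set v"
  shows "distinct (ins p v i)"
proof -
  have "distinct (take p v @ drop p v)" using assms(1) by simp
  then have "distinct (take p v)" "distinct (drop p v)" "set (take p v) \<inter> set (drop p v) = {}"
    by (simp_all only: distinct_append)
  moreover have "i \<notin> set (take p v)" "i \<notin> set (drop p v)"
    using assms(2) in_set_takeD in_set_dropD by fastforce+
  ultimately show ?thesis unfolding ins_def by auto
qed

lemma remove1_ins:
  assumes "i \<notin> set v" shows "remove1 i (ins p v i) = v"
proof -
  have "i \<notin> set (take p v)" using assms in_set_takeD by fastforce
  then show ?thesis unfolding ins_def by (simp add: remove1_append)
qed

lemma tw_ins:
  assumes "i \<notin> set v" "p \<le> length v"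
  shows "length (takeWhile (\<lambda>a. a \<noteq> i) (ins p v i)) = p"
proof -
  have "\<And>x. x \<in> set (take p v) \<Longrightarrow> x \<noteq> i" using assms in_set_takeD by fastforce
  then have "takeWhile (\<lambda>a. a \<noteq> i) (ins p v i) = take p v" unfolding ins_def by simp
  then show ?thesis using assms by simp
qed

lemma S_char:
  assumes "distinct v" "i \<notin> set v"
  shows "{w. distinct w \<and> i \<in> set w \<and> remove1 i w = v} = (\<lambda>p. ins p v i) ` {..<Suc (length v)}"
proof
  show "(\<lambda>p. ins p v i) ` {..<Suc (length v)} \<subseteq> {w. distinct w \<and> i \<in> set w \<and> remove1 i w = v}"
  proof
    fix w assume "w \<in> (\<lambda>p. ins p v i) ` {..<Suc (length v)}"
    then obtain p where w: "w = ins p v i" by blast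
    have "i \<in> set (ins p v i)" by (simp add: ins_def)
    then show "w \<in> {w. distinct w \<and> i \<in> set w \<and> remove1 i w = v}"
      using distinct_ins[OF assms, of p] remove1_ins[OF assms(2), of p] w by blast
  qed
next
  show "{w. distinct w \<and> i \<in> set w \<and> remove1 i w = v} \<subseteq> (\<lambda>p. ins p v i) ` {..<Suc (length v)}"
  proof
    fix w assume "w \<in> {w. distinct w \<and> i \<in> set w \<and> remove1 i w = v}"
    then have w: "distinct w" "i \<in> set w" "remove1 i w = v" by auto
    obtain ys zs where yz: "w = ys @ i # zs" "i \<notin> set ys" using split_list_first[OF w(2)] by blast
    then have v: "v = ys @ zs" using w(3) by (simp add: remove1_append)
    have "w = ins (length ys) v i" unfolding ins_def v yz by simp
    moreover have "length ys \<in> {..<Suc (length v)}" using v by simp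
    ultimately show "w \<in> (\<lambda>p. ins p v i) ` {..<Suc (length v)}" by blast
  qed
qed

lemma bd_letter_good:
  assumes "distinct v" "i \<notin> set v"
  shows "bd_letter i f v = (\<Sum>p<Suc (length v). (-1) ^ p * f (ins p v i))"
proof -
  have inj: "inj_on (\<lambda>p. ins p v i) {..<Suc (length v)}"
  proof (rule inj_onI)
    fix p q assume "p \<in> {..<Suc (length v)}" "q \<in> {..<Suc (length v)}" "ins p v i = ins q v i"
    then have pq: "p \<le> length v" "q \<le> length v" "ins p v i = ins q v i" by auto
    have "p = length (takeWhile (\<lambda>a. a \<noteq> i) (ins p v i))" using tw_ins[OF assms(2) pq(1)] by simp
    also have "\<dots> = length (takeWhile (\<lambda>a. a \<noteq> i) (ins q v i))" using pq(3) by simp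
    also have "\<dots> = q" using tw_ins[OF assms(2) pq(2)] by simp
    finally show "p = q" .
  qed
  have "bd_letter i f v = (\<Sum>w\<in>(\<lambda>p. ins p v i) ` {..<Suc (length v)}. (-1) ^ length (takeWhile (\<lambda>a. a \<noteq> i) w) * f w)"
    unfolding bd_letter_def S_char[OF assms] ..
  also have "\<dots> = (\<Sum>p<Suc (length v). (-1) ^ length (takeWhile (\<lambda>a. a \<noteq> i) (ins p v i)) * f (ins p v i))"
    by (rule sum.reindex[OF inj, unfolded comp_def])
  also have "\<dots> = (\<Sum>p<Suc (length v). (-1) ^ p * f (ins p v i))"
  proof (rule sum.cong)
    fix p assume "p \<in> {..<Suc (length v)}"
    then have "p \<le> length v" by simp
    then show "(-1) ^ length (takeWhile (\<lambda>a. a \<noteq> i) (ins p v i)) * f (ins p v i) = (-1) ^ p * f (ins p v i)"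
      using tw_ins[OF assms(2)] by simp
  qed simp
  finally show ?thesis .
qed

lemma shift_inj: "x \<noteq> i \<Longrightarrow> y \<noteq> i \<Longrightarrow> shift_letter i x = shift_letter i y \<Longrightarrow> x = y"
  unfolding shift_letter_def by (cases "x < i"; cases "y < i") auto

lemma shift_less: "x \<noteq> i \<Longrightarrow> y \<noteq> i \<Longrightarrow> shift_letter i x < shift_letter i y \<longleftrightarrow> x < y"
  unfolding shift_letter_def by (cases "x < i"; cases "y < i") auto

lemma descents_shift: "i \<notin> set v \<Longrightarrow> descents (map (shift_letter i) v) = descents v"
proof (induction v)
  case Nil then show ?case by simp
next
  case (Cons a v)
  then have IH: "descents (map (shift_letter i) v) = descents v" by simp
  show ?case
  proof (cases "v = []")
    case True then show ?thesis by (simp add: descents_Cons)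
  next
    case False
    have "a \<noteq> i" "hd v \<noteq> i" using Cons.prems False hd_in_set by fastforce+
    then have "shift_letter i (hd v) < shift_letter i a \<longleftrightarrow> hd v < a" by (rule shift_less[rotated])
    then show ?thesis using False IH by (simp add: descents_Cons hd_map)
  qed
qed

lemma shift_range:
  assumes "1 \<le> i" "i \<le> n" "x \<noteq> i"
  shows "shift_letter i x \<in> {1..n-1} \<longleftrightarrow> x \<in> {1..n}"
  using assms unfolding shift_letter_def by (cases "x < i") auto

lemma shift_good:
  assumes "1 \<le> i" "i \<le> n" "i \<notin> set v"
  shows "map (shift_letter i) v \<in> perm_words (n - 1) \<longleftrightarrow> distinct v \<and> set v = {1..n} - {i}"
proof -
  have inj: "inj_on (shift_letter i) (set v)"
  proof (rule inj_onI)
    fix x y assume xy: "x \<in> set v" "y \<in> set v" "shift_letter i x = shift_letter i y"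
    then have "x \<noteq> i" "y \<noteq> i" using assms(3) by auto
    then show "x = y" using xy(3) by (rule shift_inj)
  qed
  have dist: "distinct (map (shift_letter i) v) \<longleftrightarrow> distinct v" using inj by (simp add: distinct_map)
  have "shift_letter i ` set v = {1..n-1} \<longleftrightarrow> set v = {1..n} - {i}"
  proof
    assume h: "shift_letter i ` set v = {1..n-1}"
    show "set v = {1..n} - {i}"
    proof
      show "set v \<subseteq> {1..n} - {i}"
      proof
        fix x assume x: "x \<in> set v"
        then have "x \<noteq> i" using assms(3) by blast
        moreover have "shift_letter i x \<in> {1..n-1}" using h x by blast
        ultimately show "x \<in> {1..n} - {i}" using shift_range[OF assms(1,2)] by blast
      qed
    next
      show "{1..n} - {i} \<subseteq> set v"
      proof
        fix y assume y: "y \<in> {1..n} - {i}"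
        then have "shift_letter i y \<in> {1..n-1}" using shift_range[OF assms(1,2)] by blast
        then have "shift_letter i y \<in> shift_letter i ` set v" using h by simp
        then obtain x where x: "x \<in> set v" "shift_letter i x = shift_letter i y" by (metis imageE)
        moreover have "x \<noteq> i" using x assms(3) by auto
        ultimately have "x = y" using y by (intro shift_inj[of x i y]) auto
        then show "y \<in> set v" using x by simp
      qed
    qed
  next
    assume h: "set v = {1..n} - {i}"
    show "shift_letter i ` set v = {1..n-1}"
    proof
      show "shift_letter i ` set v \<subseteq> {1..n-1}"
        using h shift_range[OF assms(1,2)] by blast
    next
      show "{1..n-1} \<subseteq> shift_letter i ` set v"
      proof
        fix y assume y: "y \<in> {1..n-1}"
        define x where "x = (if y < i then y else Suc y)"
        have xi: "x \<noteq> i" unfolding x_def by auto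
        have sx: "shift_letter i x = y" unfolding x_def shift_letter_def by auto
        then have "x \<in> {1..n}" using shift_range[OF assms(1,2) xi] y by simp
        then have "x \<in> set v" using h xi by blast
        then show "y \<in> shift_letter i ` set v" using sx by blast
      qed
    qed
  qed
  then show ?thesis unfolding perm_words_def using dist by simp
qed

lemma good_length:
  assumes "distinct v" "set v = {1..n} - {i}" "i \<in> {1..n}"
  shows "length v = n - 1"
proof -
  have "length v = card ({1..n} - {i})" using distinct_card[OF assms(1)] assms(2) by simp
  also have "\<dots> = n - 1" using assms(3) by simp
  finally show ?thesis .
qed

lemma sgn_comb:
  assumes "1 \<le> i" "i \<le> n" "distinct v" "set v = {1..n} - {i}" "p \<le> length v"
  shows "(-1) ^ p * word_sgn (ins p v i) = (-1) ^ (i - 1) * word_sgn (map (shift_letter i) v)"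
proof -
  have i1: "i \<in> {1..n}" using assms(1,2) by simp
  have len: "length v = n - 1" using good_length[OF assms(3,4) i1] .
  have iv: "i \<notin> set v" using assms(4) by blast
  have "insert i ({1..n} - {i}) = {1..n}" using i1 by (rule insert_Diff)
  then have un: "set v \<union> {i} = {1..n}" using assms(4) by simp
  have a: "word_sgn (ins p v i) = (-1) ^ (length v - p) * word_sgn (v @ [i])"
    by (rule sgn_ins[OF assms(3) iv un assms(5)])
  have b: "word_sgn (v @ [i]) = (-1) ^ (n - i) * word_sgn (map (shift_letter i) v @ [n])"
    by (rule sgn_val[OF assms(1-4)])
  have n: "n = Suc (n - 1)" using assms by simp
  have c: "word_sgn (map (shift_letter i) v @ [n]) = word_sgn (map (shift_letter i) v)"
    using word_sgn_snoc[of "map (shift_letter i) v" "n - 1"] len n by simp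
  have "(-1) ^ p * word_sgn (ins p v i) = (-1) ^ (p + (length v - p) + (n - i)) * word_sgn (map (shift_letter i) v)"
    using a b c by (simp add: power_add)
  also have "p + (length v - p) + (n - i) = (i - 1) + 2 * (n - i)"
    using len assms by simp
  also have "(-1 :: int) ^ ((i - 1) + 2 * (n - i)) = (-1) ^ (i - 1)"
    by (simp add: power_add power_mult)
  finally show ?thesis .
qed

lemma part1:
  assumes n: "n \<ge> 2" and i: "i \<in> {1..n}" and k: "k \<ge> 1"
  shows "bd_letter i (lambda_elt n k) v = (-1) ^ (i - 1) * of_nat k * relabel i (lambda_elt (n - 1) k) v"
proof (cases "distinct v \<and> set v = {1..n} - {i}")
  case True
  then have dv: "distinct v" and sv: "set v = {1..n} - {i}" by auto
  have iv: "i \<notin> set v" using sv by blast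
  have i1: "1 \<le> i" "i \<le> n" using i by auto
  have len: "length v = n - 1" using good_length[OF dv sv i] .
  have nS: "Suc (length v) = n" using len n by simp
  define v' where "v' = map (shift_letter i) v"
  have v'p: "v' \<in> perm_words (n - 1)" unfolding v'_def using shift_good[OF i1 iv] True by simp
  define s' where "s' = (of_int (word_sgn v') :: complex)"
  have "insert i ({1..n} - {i}) = {1..n}" using i by (rule insert_Diff)
  then have un: "set v \<union> {i} = {1..n}" using sv by simp
  have term_eq: "(-1) ^ p * lambda_elt n k (ins p v i)
      = (-1) ^ (k - 1) * (-1) ^ (i - 1) * s' * of_nat ((n + k - 1 - descents (ins p v i)) choose n)"
    if p: "p \<in> {..<Suc (length v)}" for p
  proof -
    have ip: "ins p v i \<in> perm_words n" by (rule ins_perm[OF dv iv un])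
    have sc: "(-1) ^ p * word_sgn (ins p v i) = (-1) ^ (i - 1) * word_sgn v'"
      unfolding v'_def by (rule sgn_comb[OF i1 dv sv]) (use p in simp)
    have sc': "(-1) ^ p * (of_int (word_sgn (ins p v i)) :: complex) = (-1) ^ (i - 1) * s'"
      unfolding s'_def using arg_cong[OF sc, of "of_int :: int \<Rightarrow> complex"] by simp
    have "(-1) ^ p * lambda_elt n k (ins p v i)
        = (-1) ^ (k - 1) * ((-1) ^ p * of_int (word_sgn (ins p v i))) * of_nat ((n + k - 1 - descents (ins p v i)) choose n)"
    proof -
      have lp: "lambda_elt n k (ins p v i) = (-1) ^ (k - 1) * of_int (word_sgn (ins p v i)) * of_nat ((n + k - 1 - descents (ins p v i)) choose n)"
        by (rule lambda_perm[OF ip _ k]) (use n in simp)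
      show ?thesis unfolding lp by (simp add: algebra_simps)
    qed
    also have "\<dots> = (-1) ^ (k - 1) * (-1) ^ (i - 1) * s' * of_nat ((n + k - 1 - descents (ins p v i)) choose n)"
      unfolding sc' by (simp add: algebra_simps)
    finally show ?thesis .
  qed
  have "bd_letter i (lambda_elt n k) v = (\<Sum>p<Suc (length v). (-1) ^ p * lambda_elt n k (ins p v i))"
    by (rule bd_letter_good[OF dv iv])
  also have "\<dots> = (\<Sum>p<Suc (length v). (-1) ^ (k - 1) * (-1) ^ (i - 1) * s' * of_nat ((n + k - 1 - descents (ins p v i)) choose n))"
    by (rule sum.cong[OF refl term_eq])
  also have "\<dots> = (-1) ^ (k - 1) * (-1) ^ (i - 1) * s' * of_nat (\<Sum>p<Suc (length v). (n + k - 1 - descents (ins p v i)) choose n)"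
    by (simp only: sum_distrib_left of_nat_sum)
  also have "(\<Sum>p<Suc (length v). (n + k - 1 - descents (ins p v i)) choose n)
      = k * ((Suc (length v) + k - 2 - descents v) choose length v)"
    using key_sum[OF iv k] unfolding nS .
  finally have L: "bd_letter i (lambda_elt n k) v = (-1) ^ (k - 1) * (-1) ^ (i - 1) * s' * of_nat (k * ((Suc (length v) + k - 2 - descents v) choose length v))" .
  have "relabel i (lambda_elt (n - 1) k) v = lambda_elt (n - 1) k v'"
    unfolding relabel_def v'_def using iv by simp
  also have "\<dots> = (-1) ^ (k - 1) * s' * of_nat ((n - 1 + k - 1 - descents v') choose (n - 1))"
    unfolding s'_def by (rule lambda_perm[OF v'p _ k]) (use n in simp)
  also have "descents v' = descents v" unfolding v'_def by (rule descents_shift[OF iv])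
  also have "n - 1 + k - 1 - descents v = Suc (length v) + k - 2 - descents v" using len n by simp
  finally have R: "relabel i (lambda_elt (n - 1) k) v = (-1) ^ (k - 1) * s' * of_nat ((Suc (length v) + k - 2 - descents v) choose (length v))"
    using len by simp
  show ?thesis unfolding L R by (simp add: algebra_simps)
next
  case False
  have "bd_letter i (lambda_elt n k) v = 0"
    unfolding bd_letter_def
  proof (rule sum.neutral, rule ballI)
    fix w assume w: "w \<in> {w. distinct w \<and> i \<in> set w \<and> remove1 i w = v}"
    have "w \<notin> perm_words n"
    proof
      assume wp: "w \<in> perm_words n"
      have wd: "distinct w" "remove1 i w = v" using w by auto
      have "distinct v" using distinct_remove1[OF wd(1), of i] wd(2) by simp
      moreover have "set (remove1 i w) = set w - {i}" using wd(1) by simp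
      then have "set v = set w - {i}" using wd(2) by simp
      then have "set v = {1..n} - {i}" using wp by (simp add: perm_words_def)
      ultimately show False using False by blast
    qed
    then show "(-1) ^ length (takeWhile (\<lambda>a. a \<noteq> i) w) * lambda_elt n k w = 0"
      by (simp add: lambda_nonperm)
  qed
  moreover have "relabel i (lambda_elt (n - 1) k) v = 0"
  proof (cases "i \<in> set v")
    case True then show ?thesis by (simp add: relabel_def)
  next
    case iv: False
    have i1: "1 \<le> i" "i \<le> n" using i by auto
    have "map (shift_letter i) v \<notin> perm_words (n - 1)" using shift_good[OF i1 iv] False by simp
    then show ?thesis using iv by (simp add: relabel_def lambda_nonperm)
  qed
  ultimately show ?thesis by simp
qed

definition Pd :: "nat \<Rightarrow> nat \<Rightarrow> complex poly" where
  "Pd r d = smult (1 / fact r) (\<Prod>m<r. [: of_nat (r - 1 - d) - of_nat m, 1 :])"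

lemma poly_Pd: "poly (Pd r d) (of_nat k) = of_nat ((k + (r - 1 - d)) choose r)"
proof -
  have "poly (Pd r d) (of_nat k) = (\<Prod>m<r. of_nat k + of_nat (r - 1 - d) - of_nat m) / fact r"
    unfolding Pd_def by (simp add: poly_prod algebra_simps)
  also have "\<dots> = (of_nat (k + (r - 1 - d)) gchoose r)"
    unfolding gbinomial_prod_rev by (simp add: atLeast0LessThan)
  also have "\<dots> = of_nat ((k + (r - 1 - d)) choose r)"
    by (rule binomial_gbinomial[symmetric])
  finally show ?thesis .
qed

lemma degree_Pd: "degree (Pd r d) \<le> r"
proof -
  have "degree (\<Prod>m<r. [: of_nat (r - 1 - d) - of_nat m, 1 :] :: complex poly) \<le> (\<Sum>m<r. degree ([: of_nat (r - 1 - d) - of_nat m, 1 :] :: complex poly))"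
    using degree_prod_sum_le[of "{..<r}" "\<lambda>m. [: of_nat (r - 1 - d) - of_nat m, 1 :] :: complex poly"] by (simp add: comp_def)
  also have "\<dots> = r" by simp
  finally show ?thesis unfolding Pd_def using degree_smult_le order_trans by blast
qed

lemma coeff0_Pd: "d \<le> r - 1 \<Longrightarrow> r \<ge> 1 \<Longrightarrow> coeff (Pd r d) 0 = 0"
  using poly_Pd[of r d 0] by (simp add: poly_0_coeff_0[symmetric] binomial_eq_0)

definition pw :: "nat \<Rightarrow> nat list \<Rightarrow> complex poly" where
  "pw r w = (if w \<in> perm_words r then smult (of_int (word_sgn w)) (Pd r (descents w)) else 0)"

lemma poly_pw:
  assumes "r \<ge> 1" "k \<ge> 1"
  shows "poly (pw r w) (of_nat k) = (-1) ^ (k - 1) * lambda_elt r k w"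
proof (cases "w \<in> perm_words r")
  case True
  have d: "descents w \<le> r - 1" using descents_le[of w] perm_words_length[OF True] by simp
  have e: "r + k - 1 - descents w = k + (r - 1 - descents w)" using d assms by simp
  have sq: "((-1::complex) ^ (k - 1)) * (-1) ^ (k - 1) = 1"
    by (simp add: power_add[symmetric])
  have "poly (pw r w) (of_nat k) = of_int (word_sgn w) * of_nat ((k + (r - 1 - descents w)) choose r)"
    using True by (simp add: pw_def poly_Pd)
  also have "(k + (r - 1 - descents w)) = r + k - 1 - descents w" using e by simp
  also have "of_int (word_sgn w) * of_nat ((r + k - 1 - descents w) choose r)
     = ((-1::complex) ^ (k - 1) * (-1) ^ (k - 1)) * (of_int (word_sgn w) * of_nat ((r + k - 1 - descents w) choose r))"
    unfolding sq by simp
  also have "\<dots> = (-1) ^ (k - 1) * lambda_elt r k w"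
    unfolding lambda_perm[OF True assms] by (simp add: algebra_simps)
  finally show ?thesis .
next
  case False then show ?thesis by (simp add: pw_def lambda_nonperm)
qed

lemma degree_pw: "degree (pw r w) \<le> r"
  unfolding pw_def using order_trans[OF degree_smult_le degree_Pd, of "of_int (word_sgn w)" r "descents w"] by simp

lemma coeff0_pw:
  assumes "r \<ge> 1" shows "coeff (pw r w) 0 = 0"
proof (cases "w \<in> perm_words r")
  case True
  have d: "descents w \<le> r - 1" using descents_le[of w] perm_words_length[OF True] by simp
  show ?thesis using True coeff0_Pd[OF d assms] by (simp add: pw_def)
qed (simp add: pw_def)

lemma poly_zero_by_roots:
  fixes p :: "complex poly"
  assumes "finite S" "card S > degree p" "\<And>x. x \<in> S \<Longrightarrow> poly p x = 0"
  shows "p = 0"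
proof (rule ccontr)
  assume p: "p \<noteq> 0"
  have "S \<subseteq> {x. poly p x = 0}" using assms(3) by blast
  then have "card S \<le> card {x. poly p x = 0}" using poly_roots_finite[OF p] by (rule card_mono[rotated])
  also have "\<dots> \<le> degree p" by (rule card_poly_roots_bound[OF p])
  finally show False using assms(2) by simp
qed

lemma card_of_nat_image: "card ((of_nat :: nat \<Rightarrow> complex) ` A) = card A"
  by (rule card_image) (simp add: inj_on_def)

lemma vandermonde_zero:
  fixes c :: "nat \<Rightarrow> complex"
  assumes "\<And>k. k \<in> {1..r} \<Longrightarrow> (\<Sum>j=1..r. of_nat k ^ j * c j) = 0" "j \<in> {1..r}"
  shows "c j = 0"
proof -
  define q where "q = (\<Sum>j=1..r. monom (c j) j)"
  have pq: "poly q x = (\<Sum>j=1..r. x ^ j * c j)" for x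
    unfolding q_def by (simp add: poly_sum poly_monom mult.commute)
  have dq: "degree q \<le> r" unfolding q_def
    by (rule degree_sum_le) (auto intro: order_trans[OF degree_monom_le])
  have "q = 0"
  proof (rule poly_zero_by_roots[of "of_nat ` {0..r}"])
    have "card (of_nat ` {0..r} :: complex set) = Suc r" by (simp add: card_of_nat_image)
    then show "card (of_nat ` {0..r} :: complex set) > degree q" using dq by simp
  next
    fix x assume "x \<in> (of_nat ` {0..r} :: complex set)"
    then obtain k where k: "k \<in> {0..r}" "x = of_nat k" by blast
    show "poly q x = 0"
    proof (cases "k = 0")
      case True
      have "(\<Sum>j=1..r. (0::complex) ^ j * c j) = 0" by (rule sum.neutral) auto
      then show ?thesis using k True by (simp add: pq)
    next
      case False then show ?thesis using k assms(1)[of k] by (simp add: pq)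
    qed
  qed simp
  then have "coeff q j = 0" by simp
  moreover have "coeff q j = c j" unfolding q_def coeff_sum using assms(2) by simp
  ultimately show ?thesis by simp
qed

lemma poly_pw_sum:
  assumes r: "r \<ge> 1"
  shows "poly (pw r w) (of_nat k) = (\<Sum>j=1..r. of_nat k ^ j * coeff (pw r w) j)"
proof -
  have "poly (pw r w) (of_nat k) = poly (\<Sum>j\<le>r. monom (coeff (pw r w) j) j) (of_nat k)"
    by (simp add: poly_as_sum_of_monoms'[OF degree_pw])
  also have "\<dots> = (\<Sum>j\<le>r. of_nat k ^ j * coeff (pw r w) j)"
    by (simp add: poly_sum poly_monom mult.commute)
  also have "{..r} = insert 0 {1..r}" by auto
  also have "(\<Sum>j\<in>insert 0 {1..r}. of_nat k ^ j * coeff (pw r w) j) = (\<Sum>j=1..r. of_nat k ^ j * coeff (pw r w) j)"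
    using coeff0_pw[OF r] by simp
  finally show ?thesis .
qed

lemma euler_idem_eq:
  assumes r: "r \<ge> 1"
  shows "euler_idem r = (\<lambda>j w. if j \<in> {1..r} then coeff (pw r w) j else 0)"
  unfolding euler_idem_def
proof (rule the_equality)
  let ?E = "(\<lambda>j w. if j \<in> {1..r} then coeff (pw r w) j else 0)"
  have sumE: "(\<Sum>j=1..r. of_nat k ^ j * ?E j w) = (\<Sum>j=1..r. of_nat k ^ j * coeff (pw r w) j)" for k w
    by (rule sum.cong) auto
  show "(\<forall>j. j \<notin> {1..r} \<longrightarrow> ?E j = (\<lambda>_. 0)) \<and>
      (\<forall>k\<in>{1..r}. \<forall>w. (-1) ^ (k - 1) * lambda_elt r k w = (\<Sum>j=1..r. of_nat k ^ j * ?E j w))"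
  proof (intro conjI allI ballI impI)
    fix j :: nat assume "j \<notin> {1..r}" then show "?E j = (\<lambda>_. 0)" by (auto simp: fun_eq_iff)
  next
    fix k w assume k: "k \<in> {1..r}"
    show "(-1) ^ (k - 1) * lambda_elt r k w = (\<Sum>j=1..r. of_nat k ^ j * ?E j w)"
      unfolding sumE poly_pw_sum[OF r, symmetric] using poly_pw[OF r, of k w] k by simp
  qed
next
  let ?E = "(\<lambda>j w. if j \<in> {1..r} then coeff (pw r w) j else 0)"
  fix e :: "nat \<Rightarrow> lincomb"
  assume h: "(\<forall>j. j \<notin> {1..r} \<longrightarrow> e j = (\<lambda>_. 0)) \<and>
      (\<forall>k\<in>{1..r}. \<forall>w. (-1) ^ (k - 1) * lambda_elt r k w = (\<Sum>j=1..r. of_nat k ^ j * e j w))"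
  show "e = ?E"
  proof (intro ext)
    fix j w
    show "e j w = ?E j w"
    proof (cases "j \<in> {1..r}")
      case False
      then have "e j = (\<lambda>_. 0)" using h by blast
      then show ?thesis using False by auto
    next
      case True
      have "e j w - coeff (pw r w) j = 0"
      proof (rule vandermonde_zero[where c = "\<lambda>j. e j w - coeff (pw r w) j", OF _ True])
        fix k assume k: "k \<in> {1..r}"
        have "(\<Sum>j=1..r. of_nat k ^ j * e j w) = (-1) ^ (k - 1) * lambda_elt r k w" using h k by simp
        also have "\<dots> = (\<Sum>j=1..r. of_nat k ^ j * coeff (pw r w) j)"
          using poly_pw[OF r, of k w] poly_pw_sum[OF r, of w k] k by simp
        finally show "(\<Sum>j=1..r. of_nat k ^ j * (e j w - coeff (pw r w) j)) = 0"
          by (simp add: right_diff_distrib sum_subtractf)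
      qed
      then show ?thesis using True by simp
    qed
  qed
qed

lemma T_finite: "finite {w. distinct w \<and> i \<in> set w \<and> remove1 i w = (v :: nat list)}"
proof (cases "distinct v \<and> i \<notin> set v")
  case True
  then show ?thesis using S_char[of v i] by simp
next
  case False
  have "{w. distinct w \<and> i \<in> set w \<and> remove1 i w = v} = {}"
  proof (rule equals0I)
    fix w assume "w \<in> {w. distinct w \<and> i \<in> set w \<and> remove1 i w = v}"
    then have wd: "distinct w" "remove1 i w = v" by auto
    have "distinct v" using distinct_remove1[OF wd(1), of i] wd(2) by simp
    moreover have "set (remove1 i w) = set w - {i}" using wd(1) by simp
    then have "i \<notin> set v" using wd(2) by simp
    ultimately show False using False by blast
  qed
  then show ?thesis by (metis finite.emptyI)
qed

lemma part2:
  assumes n: "n \<ge> 2" and i: "i \<in> {1..n}" and k: "k \<in> {1..n}"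
  shows "bd_letter i (euler_idem n k) v = (-1) ^ (i - 1) * relabel i (euler_idem (n - 1) (k - 1)) v"
proof -
  define T where "T = {w. distinct w \<and> i \<in> set w \<and> remove1 i w = v}"
  define sg where "sg w = ((-1) ^ length (takeWhile (\<lambda>a. a \<noteq> i) w) :: complex)" for w
  have n1: "n \<ge> 1" "n - 1 \<ge> 1" using n by auto
  define v' where "v' = map (shift_letter i) v"
  define Q where "Q = (\<Sum>w\<in>T. smult (sg w) (pw n w))"
  define R where "R = (if i \<in> set v then 0 else smult ((-1) ^ (i - 1)) (pCons 0 (pw (n - 1) v')))"
  have fT: "finite T" unfolding T_def by (rule T_finite)
  have L: "bd_letter i (euler_idem n k) v = coeff Q k"
    unfolding bd_letter_def euler_idem_eq[OF n1(1)] Q_def T_def sg_def coeff_sum using k by simp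
  have dQ: "degree Q \<le> n" unfolding Q_def
    by (rule degree_sum_le[OF fT]) (rule order_trans[OF degree_smult_le degree_pw])
  have dR: "degree R \<le> n"
  proof (cases "i \<in> set v")
    case False
    have "degree (pCons 0 (pw (n - 1) v')) \<le> Suc (n - 1)"
      using degree_pCons_le[of 0 "pw (n - 1) v'"] degree_pw[of "n - 1" v'] by simp
    then have d1: "degree (pCons 0 (pw (n - 1) v')) \<le> n" using n by simp
    have "R = smult ((-1) ^ (i - 1)) (pCons 0 (pw (n - 1) v'))" using False by (simp add: R_def)
    then show ?thesis using order_trans[OF degree_smult_le d1] by (simp only:)
  qed (simp add: R_def)
  have QR: "Q - R = 0"
  proof (rule poly_zero_by_roots[of "of_nat ` {1..Suc n}"])
    have "card (of_nat ` {1..Suc n} :: complex set) = Suc n" by (simp add: card_of_nat_image)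
    moreover have "degree (Q - R) \<le> n" using dQ dR by (rule degree_diff_le)
    ultimately show "card (of_nat ` {1..Suc n} :: complex set) > degree (Q - R)" by simp
  next
    fix x :: complex assume "x \<in> of_nat ` {1..Suc n}"
    then obtain k' where k': "k' \<ge> 1" "x = of_nat k'" by auto
    have "poly Q x = (\<Sum>w\<in>T. sg w * ((-1) ^ (k' - 1) * lambda_elt n k' w))"
      unfolding Q_def poly_sum k'(2) using poly_pw[OF n1(1) k'(1)] by simp
    also have "\<dots> = (-1) ^ (k' - 1) * bd_letter i (lambda_elt n k') v"
      unfolding bd_letter_def T_def sg_def sum_distrib_left by (rule sum.cong) (simp_all add: algebra_simps)
    also have "\<dots> = (-1) ^ (k' - 1) * ((-1) ^ (i - 1) * of_nat k' * relabel i (lambda_elt (n - 1) k') v)"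
      using part1[OF n i k'(1)] by simp
    also have "\<dots> = poly R x"
    proof (cases "i \<in> set v")
      case True then show ?thesis by (simp add: R_def relabel_def)
    next
      case False
      have "poly R x = (-1) ^ (i - 1) * (of_nat k' * ((-1) ^ (k' - 1) * lambda_elt (n - 1) k' v'))"
        unfolding R_def k'(2) using False poly_pw[OF n1(2) k'(1), of v'] by simp
      then show ?thesis using False by (simp add: relabel_def v'_def algebra_simps)
    qed
    finally show "poly (Q - R) x = 0" by simp
  qed simp
  then have "Q = R" by simp
  then have "bd_letter i (euler_idem n k) v = coeff R k" using L by simp
  also have "coeff R k = (if i \<in> set v then 0 else (-1) ^ (i - 1) * coeff (pw (n - 1) v') (k - 1))"
  proof -
    obtain k0 where k0: "k = Suc k0" using k by (cases k) auto
    show ?thesis unfolding k0 R_def by simp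
  qed
  also have "\<dots> = (-1) ^ (i - 1) * relabel i (euler_idem (n - 1) (k - 1)) v"
  proof (cases "i \<in> set v")
    case True then show ?thesis by (simp add: relabel_def)
  next
    case False
    have "euler_idem (n - 1) (k - 1) v' = coeff (pw (n - 1) v') (k - 1)"
    proof (cases "k - 1 = 0")
      case True then show ?thesis unfolding euler_idem_eq[OF n1(2)] using coeff0_pw[OF n1(2)] by simp
    next
      case False
      then have "k - 1 \<in> {1..n - 1}" using k by auto
      then show ?thesis unfolding euler_idem_eq[OF n1(2)] by simp
    qed
    then show ?thesis using False by (simp add: relabel_def v'_def)
  qed
  finally show ?thesis .
qed

theorem theorem2p1:
  fixes n i :: nat
  assumes "n \<ge> 2" and "i \<in> {1..n}"
  shows "(\<forall>k\<ge>1. bd_letter i (lambda_elt n k)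
            = (\<lambda>v. (-1) ^ (i - 1) * of_nat k * relabel i (lambda_elt (n - 1) k) v))
       \<and> (\<forall>k\<in>{1..n}. bd_letter i (euler_idem n k)
            = (\<lambda>v. (-1) ^ (i - 1) * relabel i (euler_idem (n - 1) (k - 1)) v))"
proof (intro conjI allI impI ballI ext)
  fix k v assume "(k::nat) \<ge> 1"
  then show "bd_letter i (lambda_elt n k) v = (-1) ^ (i - 1) * of_nat k * relabel i (lambda_elt (n - 1) k) v"
    by (rule part1[OF assms])
next
  fix k v assume "k \<in> {1..n}"
  then show "bd_letter i (euler_idem n k) v = (-1) ^ (i - 1) * relabel i (euler_idem (n - 1) (k - 1)) v"
    by (rule part2[OF assms])
qed

end
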